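(* Let $(\mathfrak{g},\omega)$ be a $2n$-dimensional real irreducible symplectic Lie algebra. For $\alpha\in\mathfrak{g}^*$ let $\omega_\alpha=\omega+d\alpha$. If $\omega_\alpha$ is non-degenerate, then $(\mathfrak{g},\omega_\alpha)$ is a $2n$-dimensional irreducible symplectic Lie algebra.
   Context: A symplectic Lie algebra is a real Lie algebra with a non-degenerate 2-form $\omega$ satisfying $\omega([x,y],z)+\omega([y,z],x)+\omega([z,x],y)=0$; it is irreducible if it has no nonzero ideal $\mathfrak{j}$ with $\omega(\mathfrak{j},\mathfrak{j})=0$. $d\alpha(x,y)=-\alpha([x,y])$. *)

theory Defs
  imports "HOL-Analysis.Analysis"
begin

text \<open>A finite-dimensional real Lie algebra: the underlying space is a
finite-dimensional real vector space (type of class euclidean_space; the inner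
product is irrelevant), with a bilinear alternating bracket satisfying Jacobi.\<close>

definition lie_algebra :: "('v::euclidean_space \<Rightarrow> 'v \<Rightarrow> 'v) \<Rightarrow> bool" where
  "lie_algebra br \<longleftrightarrow> bilinear br \<and> (\<forall>x. br x x = 0) \<and>
     (\<forall>x y z. br x (br y z) + br y (br z x) + br z (br x y) = 0)"

definition nondegenerate_form :: "('v::real_vector \<Rightarrow> 'v \<Rightarrow> real) \<Rightarrow> bool" where
  "nondegenerate_form \<omega> \<longleftrightarrow> (\<forall>x. (\<forall>y. \<omega> x y = 0) \<longrightarrow> x = 0)"

definition symplectic_lie_algebra :: "('v::euclidean_space \<Rightarrow> 'v \<Rightarrow> 'v) \<Rightarrow> ('v \<Rightarrow> 'v \<Rightarrow> real) \<Rightarrow> bool" where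
  "symplectic_lie_algebra br \<omega> \<longleftrightarrow> lie_algebra br \<and> bilinear \<omega> \<and> (\<forall>x. \<omega> x x = 0) \<and>
     nondegenerate_form \<omega> \<and>
     (\<forall>x y z. \<omega> (br x y) z + \<omega> (br y z) x + \<omega> (br z x) y = 0)"

definition lie_ideal :: "('v::euclidean_space \<Rightarrow> 'v \<Rightarrow> 'v) \<Rightarrow> 'v set \<Rightarrow> bool" where
  "lie_ideal br J \<longleftrightarrow> subspace J \<and> (\<forall>x y. y \<in> J \<longrightarrow> br x y \<in> J)"

definition irreducible_symplectic_lie_algebra ::
  "('v::euclidean_space \<Rightarrow> 'v \<Rightarrow> 'v) \<Rightarrow> ('v \<Rightarrow> 'v \<Rightarrow> real) \<Rightarrow> bool" where
  "irreducible_symplectic_lie_algebra br \<omega> \<longleftrightarrow> symplectic_lie_algebra br \<omega> \<and>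
     \<not> (\<exists>J. lie_ideal br J \<and> J \<noteq> {0} \<and> (\<forall>x\<in>J. \<forall>y\<in>J. \<omega> x y = 0))"

definition lie_d :: "('v \<Rightarrow> 'v \<Rightarrow> 'v) \<Rightarrow> ('v \<Rightarrow> real) \<Rightarrow> 'v \<Rightarrow> 'v \<Rightarrow> real" where
  "lie_d br \<alpha> x y = - \<alpha> (br x y)"

definition omega_alpha :: "('v \<Rightarrow> 'v \<Rightarrow> 'v) \<Rightarrow> ('v \<Rightarrow> 'v \<Rightarrow> real) \<Rightarrow> ('v \<Rightarrow> real) \<Rightarrow> 'v \<Rightarrow> 'v \<Rightarrow> real" where
  "omega_alpha br \<omega> \<alpha> x y = \<omega> x y + lie_d br \<alpha> x y"

end

theory Submission
  imports Defs
begin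

lemma br_anti:
  assumes "lie_algebra br" shows "br y z = - br z y"
proof -
  have bl: "bilinear br" and al: "\<And>x. br x x = 0" using assms unfolding lie_algebra_def by auto
  have "br (y+z) (y+z) = br y y + br y z + br z y + br z z"
    using bl by (simp add: bilinear_ladd bilinear_radd)
  then show ?thesis using al by (simp add: eq_neg_iff_add_eq_0)
qed

theorem lemma2p6:
  fixes br :: "'v::euclidean_space \<Rightarrow> 'v \<Rightarrow> 'v"
    and \<omega> :: "'v \<Rightarrow> 'v \<Rightarrow> real"
    and \<alpha> :: "'v \<Rightarrow> real"
    and n :: nat
  assumes "DIM('v) = 2 * n"
    and "irreducible_symplectic_lie_algebra br \<omega>"
    and "linear \<alpha>"
    and "nondegenerate_form (omega_alpha br \<omega> \<alpha>)"
  shows "DIM('v) = 2 * n \<and> irreducible_symplectic_lie_algebra br (omega_alpha br \<omega> \<alpha>)"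
proof -
  let ?w = "omega_alpha br \<omega> \<alpha>"
  have S: "symplectic_lie_algebra br \<omega>" and irr: "\<not> (\<exists>J. lie_ideal br J \<and> J \<noteq> {0} \<and> (\<forall>x\<in>J. \<forall>y\<in>J. \<omega> x y = 0))"
    using assms(2) unfolding irreducible_symplectic_lie_algebra_def by auto
  have L: "lie_algebra br" and bw: "bilinear \<omega>" and aw: "\<And>x. \<omega> x x = 0"
    and cw: "\<And>x y z. \<omega> (br x y) z + \<omega> (br y z) x + \<omega> (br z x) y = 0"
    using S unfolding symplectic_lie_algebra_def by auto
  have bb: "bilinear br" and ab: "\<And>x. br x x = 0"
    and jac: "\<And>x y z. br x (br y z) + br y (br z x) + br z (br x y) = 0"
    using L unfolding lie_algebra_def by auto
  have la: "linear \<alpha>" by fact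
  have a0: "\<alpha> 0 = 0" using la linear_0 by blast
  have wdef: "\<And>x y. ?w x y = \<omega> x y - \<alpha> (br x y)"
    by (simp add: omega_alpha_def lie_d_def)
  have bil: "bilinear ?w"
  proof -
    have l1: "linear (\<lambda>y. \<alpha> (br x y))" for x
      using linear_compose[OF bb[unfolded bilinear_def, THEN conjunct1, rule_format] la] by (simp add: o_def)
    have l2: "linear (\<lambda>x. \<alpha> (br x y))" for y
      using linear_compose[OF bb[unfolded bilinear_def, THEN conjunct2, rule_format] la] by (simp add: o_def)
    show ?thesis unfolding bilinear_def wdef
      using l1 l2 bw unfolding bilinear_def
      by (auto intro: linear_compose_sub)
  qed
  have alt: "\<And>x. ?w x x = 0" using aw ab a0 by (simp add: wdef)
  have coc: "?w (br x y) z + ?w (br y z) x + ?w (br z x) y = 0" for x y z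
  proof -
    have "br (br x y) z + br (br y z) x + br (br z x) y
        = - (br x (br y z) + br y (br z x) + br z (br x y))"
      using br_anti[OF L, of "br x y" z] br_anti[OF L, of "br y z" x] br_anti[OF L, of "br z x" y]
      by (simp add: algebra_simps)
    also have "\<dots> = 0" using jac by simp
    finally have e: "br (br x y) z + br (br y z) x + br (br z x) y = 0" .
    have "\<alpha> (br (br x y) z) + \<alpha> (br (br y z) x) + \<alpha> (br (br z x) y) = 0"
      using e a0 linear_add[OF la] by metis
    then show ?thesis using cw[of x y z] by (simp add: wdef)
  qed
  have nd: "nondegenerate_form ?w" by fact
  have "\<not> (\<exists>J. lie_ideal br J \<and> J \<noteq> {0} \<and> (\<forall>x\<in>J. \<forall>y\<in>J. ?w x y = 0))"
  proof
    assume "\<exists>J. lie_ideal br J \<and> J \<noteq> {0} \<and> (\<forall>x\<in>J. \<forall>y\<in>J. ?w x y = 0)"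
    then obtain J where J: "lie_ideal br J" "J \<noteq> {0}" "\<forall>x\<in>J. \<forall>y\<in>J. ?w x y = 0" by blast
    have sJ: "subspace J" and iJ: "\<And>x y. y \<in> J \<Longrightarrow> br x y \<in> J"
      using J(1) unfolding lie_ideal_def by auto
    have iJ2: "br y z \<in> J" if "y \<in> J" for y z
    proof -
      have "br z y \<in> J" using iJ that .
      then have "- br z y \<in> J" using sJ subspace_neg by blast
      then show ?thesis using br_anti[OF L] by metis
    qed
    have comm: "br x y = 0" if "x \<in> J" "y \<in> J" for x y
    proof -
      have "\<forall>z. ?w (br x y) z = 0"
      proof
        fix z
        have "?w (br y z) x = 0" using J(3) iJ2 that by blast
        moreover have "?w (br z x) y = 0" using J(3) iJ that by blast
        ultimately show "?w (br x y) z = 0" using coc[of x y z] by simp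
      qed
      then show ?thesis using nd unfolding nondegenerate_form_def by blast
    qed
    have "\<forall>x\<in>J. \<forall>y\<in>J. \<omega> x y = 0"
    proof (intro ballI)
      fix x y assume "x \<in> J" "y \<in> J"
      then show "\<omega> x y = 0" using J(3) comm[of x y] a0 by (simp add: wdef)
    qed
    then show False using irr J(1,2) by blast
  qed
  then show ?thesis using assms(1) bil alt coc nd L
    unfolding irreducible_symplectic_lie_algebra_def symplectic_lie_algebra_def by blast
qed

end
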